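(* (Work in $\mathsf{ZFC}$.) Let $\kappa$ be a strongly inaccessible cardinal. There is no $\boldsymbol\Sigma(L_{\kappa\omega}(=,\neq,\in,\notin))$ formula $\phi(x,y)$ (with parameters from $H_\kappa$) such that for all $a,b\in H_\kappa$: $H_\kappa\models\phi[a,b]$ if and only if $b$ is the powerset of $a$.
   Context: $H_\kappa$ is the set of sets of hereditary cardinality less than $\kappa$. A $\boldsymbol\Sigma(L_{\kappa\omega}(=,\neq,\in,\notin))$ formula is an infinitary formula with finitely many free variables, built from atomic formulas $s=t$, $s\neq t$, $s\in t$, $s\notin t$ (and $\top,\bot$), where terms are variables or parameters naming elements of $H_\kappa$, using conjunctions and disjunctions of fewer than $\kappa$ formulas, bounded universal quantification $\forall x\in t$, and unbounded existential quantification $\exists x$; no negation connective, no implication, no unbounded universal quantification. *)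

theory Defs
  imports Main
begin

definition elts :: "('v \<Rightarrow> 'v \<Rightarrow> bool) \<Rightarrow> 'v \<Rightarrow> 'v set" where
  "elts mem x = {y. mem y x}"

definition zf_model :: "('v \<Rightarrow> 'v \<Rightarrow> bool) \<Rightarrow> bool" where
  "zf_model mem \<longleftrightarrow>
     (\<forall>x y. elts mem x = elts mem y \<longrightarrow> x = y) \<comment> \<open>extensionality\<close>
   \<and> wfP mem \<comment> \<open>foundation\<close>
   \<and> (\<forall>x S. S \<subseteq> elts mem x \<longrightarrow> (\<exists>z. elts mem z = S)) \<comment> \<open>separation\<close>
   \<and> (\<forall>x y. \<exists>z. elts mem z = {x, y}) \<comment> \<open>pairing\<close>
   \<and> (\<forall>x. \<exists>z. elts mem z = \<Union> (elts mem ` elts mem x)) \<comment> \<open>union\<close>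
   \<and> (\<forall>x. \<exists>z. elts mem z = {y. elts mem y \<subseteq> elts mem x}) \<comment> \<open>power set\<close>
   \<and> (\<forall>x (f :: 'v \<Rightarrow> 'v). \<exists>z. elts mem z = f ` elts mem x) \<comment> \<open>replacement\<close>
   \<and> (\<exists>z. (\<exists>e\<in>elts mem z. elts mem e = {})
          \<and> (\<forall>y\<in>elts mem z. \<exists>s\<in>elts mem z. elts mem s = insert y (elts mem y))) \<comment> \<open>infinity\<close>"

definition transset :: "('v \<Rightarrow> 'v \<Rightarrow> bool) \<Rightarrow> 'v \<Rightarrow> bool" where
  "transset mem x \<longleftrightarrow> (\<forall>y\<in>elts mem x. elts mem y \<subseteq> elts mem x)"

definition ordinal :: "('v \<Rightarrow> 'v \<Rightarrow> bool) \<Rightarrow> 'v \<Rightarrow> bool" where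
  "ordinal mem x \<longleftrightarrow> transset mem x \<and> (\<forall>y\<in>elts mem x. transset mem y)"

definition cardinal :: "('v \<Rightarrow> 'v \<Rightarrow> bool) \<Rightarrow> 'v \<Rightarrow> bool" where
  "cardinal mem k \<longleftrightarrow> ordinal mem k \<and>
     (\<forall>b\<in>elts mem k. (card_of (elts mem b), card_of (elts mem k)) \<notin> ordIso)"

definition strongly_inaccessible :: "('v \<Rightarrow> 'v \<Rightarrow> bool) \<Rightarrow> 'v \<Rightarrow> bool" where
  "strongly_inaccessible mem k \<longleftrightarrow> cardinal mem k
   \<and> (card_of (UNIV :: nat set), card_of (elts mem k)) \<in> ordLess \<comment> \<open>uncountable\<close>
   \<and> (\<forall>S. S \<subseteq> elts mem k \<longrightarrow> (card_of S, card_of (elts mem k)) \<in> ordLess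
          \<longrightarrow> (\<exists>b\<in>elts mem k. S \<subseteq> elts mem b)) \<comment> \<open>regular\<close>
   \<and> (\<forall>b\<in>elts mem k. (card_of (Pow (elts mem b)), card_of (elts mem k)) \<in> ordLess) \<comment> \<open>strong limit\<close>"

definition Hk :: "('v \<Rightarrow> 'v \<Rightarrow> bool) \<Rightarrow> 'v \<Rightarrow> 'v set" where
  "Hk mem k = {x. (card_of {y. mem\<^sup>+\<^sup>+ y x}, card_of (elts mem k)) \<in> ordLess}"

datatype 'v tm = Var nat | Par 'v

datatype 'v fm =
    FEq "'v tm" "'v tm" | FNeq "'v tm" "'v tm" | FMem "'v tm" "'v tm" | FNmem "'v tm" "'v tm"
  | FTop | FBot
  | FConj "'v set" "'v \<Rightarrow> 'v fm"
  | FDisj "'v set" "'v \<Rightarrow> 'v fm"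
  | FBall nat "'v tm" "'v fm"
  | FEx nat "'v fm"

fun fv_tm :: "'v tm \<Rightarrow> nat set" where
  "fv_tm (Var n) = {n}" | "fv_tm (Par _) = {}"

fun pars_tm :: "'v tm \<Rightarrow> 'v set" where
  "pars_tm (Var _) = {}" | "pars_tm (Par p) = {p}"

primrec fv :: "'v fm \<Rightarrow> nat set" where
  "fv (FEq s t) = fv_tm s \<union> fv_tm t"
| "fv (FNeq s t) = fv_tm s \<union> fv_tm t"
| "fv (FMem s t) = fv_tm s \<union> fv_tm t"
| "fv (FNmem s t) = fv_tm s \<union> fv_tm t"
| "fv FTop = {}"
| "fv FBot = {}"
| "fv (FConj I f) = (\<Union>i\<in>I. fv (f i))"
| "fv (FDisj I f) = (\<Union>i\<in>I. fv (f i))"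
| "fv (FBall x t p) = fv_tm t \<union> (fv p - {x})"
| "fv (FEx x p) = fv p - {x}"

primrec sigma_fm :: "('v \<Rightarrow> 'v \<Rightarrow> bool) \<Rightarrow> 'v \<Rightarrow> 'v fm \<Rightarrow> bool" where
  "sigma_fm mem k (FEq s t) = (pars_tm s \<union> pars_tm t \<subseteq> Hk mem k)"
| "sigma_fm mem k (FNeq s t) = (pars_tm s \<union> pars_tm t \<subseteq> Hk mem k)"
| "sigma_fm mem k (FMem s t) = (pars_tm s \<union> pars_tm t \<subseteq> Hk mem k)"
| "sigma_fm mem k (FNmem s t) = (pars_tm s \<union> pars_tm t \<subseteq> Hk mem k)"
| "sigma_fm mem k FTop = True"
| "sigma_fm mem k FBot = True"
| "sigma_fm mem k (FConj I f) = ((card_of I, card_of (elts mem k)) \<in> ordLess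
      \<and> (\<forall>i\<in>I. sigma_fm mem k (f i)))"
| "sigma_fm mem k (FDisj I f) = ((card_of I, card_of (elts mem k)) \<in> ordLess
      \<and> (\<forall>i\<in>I. sigma_fm mem k (f i)))"
| "sigma_fm mem k (FBall x t p) = (pars_tm t \<subseteq> Hk mem k \<and> sigma_fm mem k p)"
| "sigma_fm mem k (FEx x p) = sigma_fm mem k p"

fun ev :: "(nat \<Rightarrow> 'v) \<Rightarrow> 'v tm \<Rightarrow> 'v" where
  "ev e (Var n) = e n" | "ev e (Par p) = p"

primrec sat :: "('v \<Rightarrow> 'v \<Rightarrow> bool) \<Rightarrow> 'v set \<Rightarrow> (nat \<Rightarrow> 'v) \<Rightarrow> 'v fm \<Rightarrow> bool" where
  "sat mem H e (FEq s t) = (ev e s = ev e t)"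
| "sat mem H e (FNeq s t) = (ev e s \<noteq> ev e t)"
| "sat mem H e (FMem s t) = mem (ev e s) (ev e t)"
| "sat mem H e (FNmem s t) = (\<not> mem (ev e s) (ev e t))"
| "sat mem H e FTop = True"
| "sat mem H e FBot = False"
| "sat mem H e (FConj I f) = (\<forall>i\<in>I. sat mem H e (f i))"
| "sat mem H e (FDisj I f) = (\<exists>i\<in>I. sat mem H e (f i))"
| "sat mem H e (FBall x t p) = (\<forall>u\<in>H. mem u (ev e t) \<longrightarrow> sat mem H (e(x := u)) p)"
| "sat mem H e (FEx x p) = (\<exists>u\<in>H. sat mem H (e(x := u)) p)"

end

theory Submission
  imports Defs
begin

unbundle cardinal_syntax

lemma fin_less: "finite A \<Longrightarrow> infinite B \<Longrightarrow> |A| <o |B|"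
  by (rule finite_ordLess_infinite) (simp_all add: card_of_Well_order Field_card_of card_of_well_order_on)

lemma times_less:
  assumes K: "infinite K" and a: "|A| <o |K|" and b: "|B| <o |K|"
  shows "|A \<times> B| <o |K|"
proof (cases "finite (A <+> B)")
  case True
  hence "finite A" "finite B" by auto
  hence "finite (A \<times> B)" by simp
  thus ?thesis using fin_less K by blast
next
  case False
  have L: "|A <+> B| <o |K|" using card_of_Plus_ordLess_infinite K a b by blast
  have "|A \<times> B| \<le>o |(A <+> B) \<times> B|" by (rule card_of_Times_mono1[OF card_of_Plus1])
  also have "|(A <+> B) \<times> B| \<le>o |(A <+> B) \<times> (A <+> B)|" by (rule card_of_Times_mono2[OF card_of_Plus2])
  also have "|(A <+> B) \<times> (A <+> B)| =o |A <+> B|" using card_of_Times_same_infinite False by blast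
  finally have "|A \<times> B| \<le>o |A <+> B|" .
  thus ?thesis using L ordLeq_ordLess_trans by blast
qed

lemma times_leq: "infinite D \<Longrightarrow> |A| \<le>o |D| \<Longrightarrow> |B| \<le>o |D| \<Longrightarrow> |A \<times> B| \<le>o |D|"
  by (rule card_of_Times_ordLeq_infinite_Field) (simp_all add: Field_card_of card_of_Card_order card_of_card_order_on)

lemma un_leq: "infinite D \<Longrightarrow> |A| \<le>o |D| \<Longrightarrow> |B| \<le>o |D| \<Longrightarrow> |A \<union> B| \<le>o |D|"
  by (rule card_of_Un_ordLeq_infinite_Field) (simp_all add: Field_card_of card_of_Card_order card_of_card_order_on)

lemma img_leq: "|A| \<le>o |D| \<Longrightarrow> |f ` A| \<le>o |D|"
  using card_of_image ordLeq_transitive by blast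

lemma lists_n_leq:
  assumes D: "infinite D" and S: "|S| \<le>o |D|"
  shows "|{xs. set xs \<subseteq> S \<and> length xs = n}| \<le>o |D|"
proof (induction n)
  case 0
  have "{xs. set xs \<subseteq> S \<and> length xs = 0} = {[]}" by auto
  thus ?case using fin_less[of "{[]}" D] D ordLess_imp_ordLeq by auto
next
  case (Suc n)
  have "{xs. set xs \<subseteq> S \<and> length xs = Suc n} = (\<lambda>(x,xs). x # xs) ` (S \<times> {xs. set xs \<subseteq> S \<and> length xs = n})"
  proof (rule set_eqI, rule iffI)
    fix ys assume "ys \<in> {xs. set xs \<subseteq> S \<and> length xs = Suc n}"
    then obtain x xs where "ys = x # xs" "x \<in> S" "set xs \<subseteq> S" "length xs = n"
      by (cases ys) auto
    thus "ys \<in> (\<lambda>(x,xs). x # xs) ` (S \<times> {xs. set xs \<subseteq> S \<and> length xs = n})" by force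
  qed auto
  moreover have "|S \<times> {xs. set xs \<subseteq> S \<and> length xs = n}| \<le>o |D|" by (rule times_leq[OF D S Suc])
  ultimately show ?case using img_leq by simp
qed

lemma lists_leq:
  assumes D: "infinite D" and S: "|S| \<le>o |D|"
  shows "|{xs. set xs \<subseteq> S}| \<le>o |D|"
proof -
  have "{xs. set xs \<subseteq> S} = (\<Union>n\<in>UNIV. {xs. set xs \<subseteq> S \<and> length xs = n})" by auto
  moreover have "|UNIV :: nat set| \<le>o |D|" using D infinite_iff_card_of_nat by blast
  moreover have "|\<Union>n\<in>UNIV. {xs. set xs \<subseteq> S \<and> length xs = n}| \<le>o |D|"
    by (rule card_of_UNION_ordLeq_infinite[OF D]) (use lists_n_leq[OF D S] \<open>|UNIV :: nat set| \<le>o |D|\<close> in auto)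
  ultimately show ?thesis by simp
qed



primrec subs :: "'v fm \<Rightarrow> 'v fm set" where
  "subs (FEq s t) = {FEq s t}"
| "subs (FNeq s t) = {FNeq s t}"
| "subs (FMem s t) = {FMem s t}"
| "subs (FNmem s t) = {FNmem s t}"
| "subs FTop = {FTop}"
| "subs FBot = {FBot}"
| "subs (FConj I f) = insert (FConj I f) (\<Union>i\<in>I. subs (f i))"
| "subs (FDisj I f) = insert (FDisj I f) (\<Union>i\<in>I. subs (f i))"
| "subs (FBall x t p) = insert (FBall x t p) (subs p)"
| "subs (FEx x p) = insert (FEx x p) (subs p)"

lemma subs_self: "\<phi> \<in> subs \<phi>"
  by (cases \<phi>) auto

lemma subs_trans: "\<psi> \<in> subs \<phi> \<Longrightarrow> subs \<psi> \<subseteq> subs \<phi>"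
  by (induction \<phi>) auto

lemma fin_fv: "finite (fv \<phi>) \<Longrightarrow> \<psi> \<in> subs \<phi> \<Longrightarrow> finite (fv \<psi>)"
proof (induction \<phi>)
  case (FConj I f)
  show ?case
  proof (cases "\<psi> = FConj I f")
    case True thus ?thesis using FConj.prems by simp
  next
    case False
    then obtain i where i: "i \<in> I" "\<psi> \<in> subs (f i)" using FConj.prems by auto
    have "fv (f i) \<subseteq> fv (FConj I f)" using i by auto
    hence "finite (fv (f i))" using FConj.prems finite_subset by blast
    thus ?thesis using FConj.IH[OF rangeI] i by blast
  qed
next
  case (FDisj I f)
  show ?case
  proof (cases "\<psi> = FDisj I f")
    case True thus ?thesis using FDisj.prems by simp
  next
    case False
    then obtain i where i: "i \<in> I" "\<psi> \<in> subs (f i)" using FDisj.prems by auto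
    have "fv (f i) \<subseteq> fv (FDisj I f)" using i by auto
    hence "finite (fv (f i))" using FDisj.prems finite_subset by blast
    thus ?thesis using FDisj.IH[OF rangeI] i by blast
  qed
next
  case (FBall x t p)
  have "finite (fv p)" using FBall.prems(1) by (auto intro: finite_subset[of _ "insert x (fv p - {x})"])
  then show ?case using FBall by auto
next
  case (FEx x p)
  have "finite (fv p)" using FEx.prems(1) by (auto intro: finite_subset[of _ "insert x (fv p - {x})"])
  then show ?case using FEx by auto
qed auto

lemma sigma_sub: "sigma_fm mem k \<phi> \<Longrightarrow> \<psi> \<in> subs \<phi> \<Longrightarrow> sigma_fm mem k \<psi>"
  by (induction \<phi>) auto

primrec tp :: "'v fm \<Rightarrow> 'v set" where
  "tp (FEq s t) = pars_tm s \<union> pars_tm t"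
| "tp (FNeq s t) = pars_tm s \<union> pars_tm t"
| "tp (FMem s t) = pars_tm s \<union> pars_tm t"
| "tp (FNmem s t) = pars_tm s \<union> pars_tm t"
| "tp FTop = {}"
| "tp FBot = {}"
| "tp (FConj I f) = {}"
| "tp (FDisj I f) = {}"
| "tp (FBall x t p) = pars_tm t"
| "tp (FEx x p) = {}"

lemma finite_pars_tm: "finite (pars_tm t)" by (cases t) auto

lemma finite_tp: "finite (tp \<phi>)" by (cases \<phi>) (auto simp: finite_pars_tm)

lemma sigma_tp: "sigma_fm mem k \<phi> \<Longrightarrow> tp \<phi> \<subseteq> Hk mem k"
  by (cases \<phi>) auto

lemma ev_cong: "(\<forall>n\<in>fv_tm t. e n = e' n) \<Longrightarrow> ev e t = ev e' t"
  by (cases t) auto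

lemma sat_cong: "(\<forall>n\<in>fv \<phi>. e n = e' n) \<Longrightarrow> sat mem H e \<phi> = sat mem H e' \<phi>"
proof (induction \<phi> arbitrary: e e')
  case (FEq s t) thus ?case using ev_cong[of s e e'] ev_cong[of t e e'] by auto
next
  case (FNeq s t) thus ?case using ev_cong[of s e e'] ev_cong[of t e e'] by auto
next
  case (FMem s t) thus ?case using ev_cong[of s e e'] ev_cong[of t e e'] by auto
next
  case (FNmem s t) thus ?case using ev_cong[of s e e'] ev_cong[of t e e'] by auto
next
  case (FConj I f)
  have "\<And>i. i \<in> I \<Longrightarrow> sat mem H e (f i) = sat mem H e' (f i)"
    using FConj.prems by (intro FConj.IH[OF rangeI]) auto
  thus ?case by simp
next
  case (FDisj I f)
  have "\<And>i. i \<in> I \<Longrightarrow> sat mem H e (f i) = sat mem H e' (f i)"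
    using FDisj.prems by (intro FDisj.IH[OF rangeI]) auto
  thus ?case by simp
next
  case (FBall x t p)
  have t: "ev e t = ev e' t" using FBall.prems ev_cong[of t e e'] by auto
  have "\<And>u. sat mem H (e(x:=u)) p = sat mem H (e'(x:=u)) p"
    using FBall.prems by (intro FBall.IH) auto
  thus ?case using t by simp
next
  case (FEx x p)
  have "\<And>u. sat mem H (e(x:=u)) p = sat mem H (e'(x:=u)) p"
    using FEx.prems by (intro FEx.IH) auto
  thus ?case by simp
qed auto



definition tc :: "('v \<Rightarrow> 'v \<Rightarrow> bool) \<Rightarrow> 'v \<Rightarrow> 'v set" where
  "tc mem x = {y. mem\<^sup>+\<^sup>+ y x}"

locale zfm =
  fixes mem :: "'v \<Rightarrow> 'v \<Rightarrow> bool" and k :: 'v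
  assumes zf: "zf_model mem" and inac: "strongly_inaccessible mem k"
begin

abbreviation E where "E \<equiv> elts mem"
abbreviation K where "K \<equiv> elts mem k"
abbreviation H where "H \<equiv> Hk mem k"

lemma E_iff: "y \<in> E x \<longleftrightarrow> mem y x" by (simp add: elts_def)

lemmas zfD = zf[unfolded zf_model_def]
lemma ext: "E x = E y \<Longrightarrow> x = y" using conjunct1[OF zfD] by blast
lemma wf: "wfP mem" using conjunct1[OF conjunct2[OF zfD]] by blast
lemma sep: "S \<subseteq> E x \<Longrightarrow> \<exists>z. E z = S" using conjunct1[OF conjunct2[OF conjunct2[OF zfD]]] by blast
lemma repl: "\<exists>z. E z = f ` E x"
  using conjunct1[OF conjunct2[OF conjunct2[OF conjunct2[OF conjunct2[OF conjunct2[OF conjunct2[OF zfD]]]]]]] by blast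

lemmas inacD = inac[unfolded strongly_inaccessible_def]
lemma ord_k: "ordinal mem k" using conjunct1[OF inacD] unfolding cardinal_def by blast

lemma K_trans: "b \<in> K \<Longrightarrow> E b \<subseteq> K"
  using ord_k unfolding ordinal_def transset_def by blast

lemma b_trans: "b \<in> K \<Longrightarrow> y \<in> E b \<Longrightarrow> E y \<subseteq> E b"
  using ord_k unfolding ordinal_def transset_def by blast

lemma card_lt: "b \<in> K \<Longrightarrow> |E b| <o |K|"
proof -
  assume b: "b \<in> K"
  have "|E b| \<le>o |K|" using K_trans[OF b] card_of_mono1 by blast
  moreover have "\<not> |E b| =o |K|" using conjunct1[OF inacD] b unfolding cardinal_def by blast
  ultimately show ?thesis using ordLeq_iff_ordLess_or_ordIso by blast
qed

lemma nat_K: "|UNIV :: nat set| <o |K|" using conjunct1[OF conjunct2[OF inacD]] by blast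

lemma K_inf: "infinite K"
  using nat_K ordLess_imp_ordLeq infinite_iff_card_of_nat by blast

lemma reg: "S \<subseteq> K \<Longrightarrow> |S| <o |K| \<Longrightarrow> \<exists>b\<in>K. S \<subseteq> E b"
  using conjunct1[OF conjunct2[OF conjunct2[OF inacD]]] by blast

lemma strong: "b \<in> K \<Longrightarrow> |Pow (E b)| <o |K|"
  using conjunct2[OF conjunct2[OF conjunct2[OF inacD]]] by blast

lemma bound:
  assumes A: "|A| <o |K|" shows "\<exists>b\<in>K. |A| \<le>o |E b|"
proof -
  have "|A| \<le>o |K|" using A by (rule ordLess_imp_ordLeq)
  hence "\<exists>f. inj_on f A \<and> f ` A \<subseteq> K" by (simp only: card_of_ordLeq)
  then obtain f where f: "inj_on f A" "f ` A \<subseteq> K" by blast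
  have "|f ` A| \<le>o |A|" by (rule card_of_image)
  hence "|f ` A| <o |K|" using A by (rule ordLeq_ordLess_trans)
  with f(2) obtain b where b: "b \<in> K" "f ` A \<subseteq> E b" using reg by blast
  have "\<exists>f. inj_on f A \<and> f ` A \<subseteq> E b" using f(1) b(2) by blast
  hence "|A| \<le>o |E b|" by (simp only: card_of_ordLeq)
  thus ?thesis using b(1) by blast
qed

lemma regU:
  assumes I: "|I| <o |K|" and A: "\<forall>i\<in>I. |A i| <o |K|"
  shows "|\<Union>i\<in>I. A i| <o |K|"
proof -
  have "\<forall>i\<in>I. \<exists>b. b \<in> K \<and> |A i| \<le>o |E b|" using A bound by blast
  then obtain b where b: "\<forall>i\<in>I. b i \<in> K \<and> |A i| \<le>o |E (b i)|" by (rule bchoice[THEN exE]) blast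
  have "|b ` I| \<le>o |I|" by (rule card_of_image)
  hence "|b ` I| <o |K|" using I by (rule ordLeq_ordLess_trans)
  moreover have "b ` I \<subseteq> K" using b by blast
  ultimately obtain c where c: "c \<in> K" "b ` I \<subseteq> E c" using reg by blast
  have "\<forall>i\<in>I. |A i| \<le>o |E c|"
  proof
    fix i assume i: "i \<in> I"
    have "E (b i) \<subseteq> E c" using b_trans[OF c(1)] c(2) i by blast
    hence "|E (b i)| \<le>o |E c|" by (rule card_of_mono1)
    moreover have "|A i| \<le>o |E (b i)|" using b i by blast
    ultimately show "|A i| \<le>o |E c|" using ordLeq_transitive by blast
  qed
  hence "|SIGMA i:I. A i| \<le>o |SIGMA i:I. E c|" by (rule card_of_Sigma_mono1)
  moreover have "|I \<times> E c| <o |K|" using times_less[OF K_inf I card_lt[OF c(1)]] .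
  ultimately have "|SIGMA i:I. A i| <o |K|" by (rule ordLeq_ordLess_trans)
  with card_of_UNION_Sigma show ?thesis by (rule ordLeq_ordLess_trans)
qed

lemma un_less: "|A| <o |K| \<Longrightarrow> |B| <o |K| \<Longrightarrow> |A \<union> B| <o |K|"
  by (rule card_of_Un_ordLess_infinite[OF K_inf])

lemma fin_lessK: "finite A \<Longrightarrow> |A| <o |K|" by (erule fin_less[OF _ K_inf])

lemma tc_sub:
  assumes S: "\<forall>z\<in>S. E z \<subseteq> S" and x: "E x \<subseteq> S" shows "tc mem x \<subseteq> S"
proof
  fix y assume "y \<in> tc mem x"
  hence "mem\<^sup>+\<^sup>+ y x" by (simp add: tc_def)
  thus "y \<in> S"
  proof (induction rule: converse_tranclp_induct)
    case (base y) thus ?case using x E_iff by blast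
  next
    case (step y z) thus ?case using S E_iff by blast
  qed
qed

lemma tc_mono: "mem y x \<Longrightarrow> tc mem y \<subseteq> tc mem x"
  unfolding tc_def by (auto intro: tranclp.trancl_into_trancl)

lemma tc_mono2: "y \<in> tc mem x \<Longrightarrow> tc mem y \<subseteq> tc mem x"
  unfolding tc_def by (auto intro: tranclp_trans)

lemma H_iff: "x \<in> H \<longleftrightarrow> |tc mem x| <o |K|"
  by (simp add: Hk_def tc_def)

lemma H_trans: "x \<in> H \<Longrightarrow> mem y x \<Longrightarrow> y \<in> H"
proof -
  assume x: "x \<in> H" and y: "mem y x"
  have "|tc mem y| \<le>o |tc mem x|" using tc_mono[OF y] by (rule card_of_mono1)
  moreover have "|tc mem x| <o |K|" using x H_iff by blast
  ultimately have "|tc mem y| <o |K|" by (rule ordLeq_ordLess_trans)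
  thus "y \<in> H" using H_iff by blast
qed

lemma H_tc: "x \<in> H \<Longrightarrow> y \<in> tc mem x \<Longrightarrow> y \<in> H"
proof -
  assume x: "x \<in> H" and y: "y \<in> tc mem x"
  have "|tc mem y| \<le>o |tc mem x|" using tc_mono2[OF y] by (rule card_of_mono1)
  moreover have "|tc mem x| <o |K|" using x H_iff by blast
  ultimately have "|tc mem y| <o |K|" by (rule ordLeq_ordLess_trans)
  thus "y \<in> H" using H_iff by blast
qed

lemma subs_card: "sigma_fm mem k \<phi> \<Longrightarrow> |subs \<phi>| <o |K|"
proof (induction \<phi>)
  case (FConj I f)
  have "\<forall>i\<in>I. |subs (f i)| <o |K|" using FConj.IH[OF rangeI] FConj.prems by simp
  moreover have "|I| <o |K|" using FConj.prems by simp
  ultimately have "|\<Union>i\<in>I. subs (f i)| <o |K|" by (intro regU)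
  moreover have "|{FConj I f}| <o |K|" by (simp add: fin_lessK)
  ultimately have "|{FConj I f} \<union> (\<Union>i\<in>I. subs (f i))| <o |K|" using un_less by blast
  thus ?case by simp
next
  case (FDisj I f)
  have "\<forall>i\<in>I. |subs (f i)| <o |K|" using FDisj.IH[OF rangeI] FDisj.prems by simp
  moreover have "|I| <o |K|" using FDisj.prems by simp
  ultimately have "|\<Union>i\<in>I. subs (f i)| <o |K|" by (intro regU)
  moreover have "|{FDisj I f}| <o |K|" by (simp add: fin_lessK)
  ultimately have "|{FDisj I f} \<union> (\<Union>i\<in>I. subs (f i))| <o |K|" using un_less by blast
  thus ?case by simp
next
  case (FBall x t p)
  hence "|subs p| <o |K|" by simp
  moreover have "|{FBall x t p}| <o |K|" by (simp add: fin_lessK)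
  ultimately have "|{FBall x t p} \<union> subs p| <o |K|" using un_less by blast
  thus ?case by simp
next
  case (FEx x p)
  hence "|subs p| <o |K|" by simp
  moreover have "|{FEx x p}| <o |K|" by (simp add: fin_lessK)
  ultimately have "|{FEx x p} \<union> subs p| <o |K|" using un_less by blast
  thus ?case by simp
qed (simp_all add: fin_lessK)

end


context zfm begin

lemma wfR: "wf {(y, x). mem y x}" using wf by (simp add: wfp_def)

definition pi :: "'v set \<Rightarrow> 'v \<Rightarrow> 'v" where
  "pi M = wfrec {(y, x). mem y x} (\<lambda>f x. THE z. E z = f ` (E x \<inter> M))"

lemma pi_E: "E (pi M x) = pi M ` (E x \<inter> M)"
proof -
  have "pi M x = (THE z. E z = cut (pi M) {(y, x). mem y x} x ` (E x \<inter> M))"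
    unfolding pi_def by (subst wfrec[OF wfR]) (rule refl)
  moreover have "cut (pi M) {(y, x). mem y x} x ` (E x \<inter> M) = pi M ` (E x \<inter> M)"
    by (rule image_cong) (simp_all add: cut_def E_iff)
  ultimately have eq: "pi M x = (THE z. E z = pi M ` (E x \<inter> M))" by simp
  obtain z1 where z1: "E z1 = E x \<inter> M" using sep[of "E x \<inter> M" x] by blast
  obtain z where z: "E z = pi M ` E z1" using repl by blast
  have zz: "E z = pi M ` (E x \<inter> M)" using z z1 by simp
  have "\<exists>!z. E z = pi M ` (E x \<inter> M)"
  proof (rule ex1I[of _ z])
    show "E z = pi M ` (E x \<inter> M)" by (rule zz)
  next
    fix w assume "E w = pi M ` (E x \<inter> M)"
    with zz have "E w = E z" by simp
    thus "w = z" by (rule ext)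
  qed
  hence "E (THE z. E z = pi M ` (E x \<inter> M)) = pi M ` (E x \<inter> M)" by (rule theI')
  thus ?thesis using eq by simp
qed

lemma pi_mem: "y \<in> M \<Longrightarrow> mem y x \<Longrightarrow> mem (pi M y) (pi M x)"
  using pi_E[of M x] E_iff by blast

lemma pi_inj:
  assumes D: "\<forall>x\<in>M. \<forall>y\<in>M. x \<noteq> y \<longrightarrow> (\<exists>z\<in>M. mem z x \<noteq> mem z y)"
  shows "inj_on (pi M) M"
proof -
  have "\<forall>y\<in>M. x \<in> M \<longrightarrow> pi M x = pi M y \<longrightarrow> x = y" for x
  proof (induction x rule: wfp_induct_rule[OF wf])
    case (1 x)
    show ?case
    proof (intro ballI impI, rule ccontr)
      fix y assume y: "y \<in> M" and x: "x \<in> M" and eq: "pi M x = pi M y" and ne: "x \<noteq> y"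
      obtain z where z: "z \<in> M" "mem z x \<noteq> mem z y" using D x y ne by blast
      show False
      proof (cases "mem z x")
        case True
        hence "z \<in> E x \<inter> M" using z(1) E_iff by blast
        hence "pi M z \<in> E (pi M y)" using eq pi_E[of M x] by simp
        then obtain w where w: "w \<in> E y" "w \<in> M" "pi M z = pi M w" using pi_E[of M y] by auto
        have "z = w" using "1"[OF True] w(2,3) z(1) by blast
        thus False using True z(2) w(1) E_iff by auto
      next
        case False
        hence zy: "mem z y" using z(2) by simp
        hence "z \<in> E y \<inter> M" using z(1) E_iff by blast
        hence "pi M z \<in> E (pi M x)" using eq pi_E[of M y] by simp
        then obtain w where w: "w \<in> E x" "w \<in> M" "pi M z = pi M w" using pi_E[of M x] by auto
        have wx: "mem w x" using w(1) E_iff by blast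
        have "w = z" using "1"[OF wx] w(2,3) z(1) by simp
        thus False using False w(1) E_iff by auto
      qed
    qed
  qed
  thus ?thesis unfolding inj_on_def by blast
qed

lemma pi_fix:
  assumes FM: "F \<subseteq> M" and Fd: "\<forall>z\<in>F. E z \<subseteq> F"
  shows "x \<in> F \<Longrightarrow> pi M x = x"
proof (induction x rule: wfp_induct_rule[OF wf])
  case (1 x)
  have sub: "E x \<subseteq> F" using Fd "1.prems" by blast
  hence "E x \<inter> M = E x" using FM by blast
  hence "E (pi M x) = pi M ` E x" using pi_E by simp
  also have "\<dots> = E x"
  proof -
    have "\<forall>y\<in>E x. pi M y = y" using "1.IH" sub E_iff by blast
    thus ?thesis by simp
  qed
  finally show ?case by (rule ext)
qed

lemma pi_tc: "tc mem (pi M x) \<subseteq> pi M ` M"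
  by (rule tc_sub) (auto simp: pi_E)

end


definition envl :: "'v \<Rightarrow> 'v list \<Rightarrow> nat \<Rightarrow> 'v" where
  "envl d xs n = (if n < length xs then xs ! n else d)"

context zfm begin

definition okw :: "'v fm \<Rightarrow> (nat \<Rightarrow> 'v) \<Rightarrow> 'v \<Rightarrow> bool" where
  "okw \<psi> e u \<longleftrightarrow> u \<in> H \<and> (case \<psi> of FEx x p \<Rightarrow> sat mem H (e(x:=u)) p | _ \<Rightarrow> True)"

definition wit :: "'v \<Rightarrow> 'v fm \<Rightarrow> (nat \<Rightarrow> 'v) \<Rightarrow> 'v" where
  "wit d \<psi> e = (if \<exists>u. okw \<psi> e u then SOME u. okw \<psi> e u else d)"

definition dw :: "'v \<Rightarrow> 'v \<Rightarrow> 'v \<Rightarrow> 'v" where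
  "dw d x y = (if \<exists>z. z \<in> H \<and> mem z x \<noteq> mem z y then SOME z. z \<in> H \<and> mem z x \<noteq> mem z y else d)"

definition stepW :: "'v fm set \<Rightarrow> 'v \<Rightarrow> 'v set \<Rightarrow> 'v set" where
  "stepW Q d S = (\<lambda>(\<psi>, xs). wit d \<psi> (envl d xs)) ` (Q \<times> {xs. set xs \<subseteq> S})
     \<union> (\<lambda>(x, y). dw d x y) ` (S \<times> S)"

primrec ch :: "'v fm set \<Rightarrow> 'v \<Rightarrow> 'v set \<Rightarrow> nat \<Rightarrow> 'v set" where
  "ch Q d X 0 = X"
| "ch Q d X (Suc n) = ch Q d X n \<union> stepW Q d (ch Q d X n)"

definition hull :: "'v fm set \<Rightarrow> 'v \<Rightarrow> 'v set \<Rightarrow> 'v set" where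
  "hull Q d X = (\<Union>n. ch Q d X n)"

lemma wit_H: "d \<in> H \<Longrightarrow> wit d \<psi> e \<in> H"
proof -
  assume d: "d \<in> H"
  show ?thesis
  proof (cases "\<exists>u. okw \<psi> e u")
    case True
    hence "okw \<psi> e (SOME u. okw \<psi> e u)" by (rule someI_ex)
    hence "(SOME u. okw \<psi> e u) \<in> H" unfolding okw_def by blast
    thus ?thesis unfolding wit_def using True by (simp only: if_True)
  qed (simp add: wit_def d)
qed

lemma dw_H: "d \<in> H \<Longrightarrow> dw d x y \<in> H"
proof -
  assume d: "d \<in> H"
  show ?thesis
  proof (cases "\<exists>z. z \<in> H \<and> mem z x \<noteq> mem z y")
    case True
    have "(SOME z. z \<in> H \<and> mem z x \<noteq> mem z y) \<in> H" using someI_ex[OF True] by blast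
    moreover have "dw d x y = (SOME z. z \<in> H \<and> mem z x \<noteq> mem z y)" unfolding dw_def using True by (rule if_P)
    ultimately show ?thesis by simp
  next
    case False
    have "dw d x y = d" unfolding dw_def using False by (rule if_not_P)
    thus ?thesis using d by simp
  qed
qed

lemma ch_H: "d \<in> H \<Longrightarrow> X \<subseteq> H \<Longrightarrow> ch Q d X n \<subseteq> H"
  by (induction n) (auto simp: stepW_def wit_H dw_H)

lemma hull_H: "d \<in> H \<Longrightarrow> X \<subseteq> H \<Longrightarrow> hull Q d X \<subseteq> H"
  using ch_H unfolding hull_def by blast

lemma ch_mono: "m \<le> n \<Longrightarrow> ch Q d X m \<subseteq> ch Q d X n"
proof (induction n)
  case (Suc n) thus ?case by (cases "m = Suc n") auto
qed simp

lemma X_hull: "X \<subseteq> hull Q d X"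
  unfolding hull_def using ch.simps(1) by blast

lemma fin_in:
  assumes "finite A" shows "A \<subseteq> hull Q d X \<Longrightarrow> \<exists>n. A \<subseteq> ch Q d X n"
  using assms
proof (induction A rule: finite_induct)
  case empty thus ?case by simp
next
  case (insert a A)
  then obtain n where n: "A \<subseteq> ch Q d X n" by blast
  obtain m where m: "a \<in> ch Q d X m" using insert.prems unfolding hull_def by blast
  have "A \<subseteq> ch Q d X (max n m)" using n ch_mono[of n "max n m" Q d X] by auto
  moreover have "a \<in> ch Q d X (max n m)" using m ch_mono[of m "max n m" Q d X] by auto
  ultimately show ?case by blast
qed

lemma ch_card:
  assumes D: "infinite D" and X: "|X| \<le>o |D|" and Q: "|Q| \<le>o |D|"
  shows "|ch Q d X n| \<le>o |D|"
proof (induction n)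
  case 0 thus ?case using X by simp
next
  case (Suc n)
  let ?S = "ch Q d X n"
  have "|{xs. set xs \<subseteq> ?S}| \<le>o |D|" by (rule lists_leq[OF D Suc])
  hence a: "|Q \<times> {xs. set xs \<subseteq> ?S}| \<le>o |D|" by (rule times_leq[OF D Q])
  have b: "|?S \<times> ?S| \<le>o |D|" by (rule times_leq[OF D Suc Suc])
  have "|stepW Q d ?S| \<le>o |D|" unfolding stepW_def
    by (rule un_leq[OF D img_leq[OF a] img_leq[OF b]])
  thus ?case using un_leq[OF D Suc] by simp
qed

lemma hull_card:
  assumes D: "infinite D" and X: "|X| \<le>o |D|" and Q: "|Q| \<le>o |D|"
  shows "|hull Q d X| \<le>o |D|"
proof -
  have "|UNIV :: nat set| \<le>o |D|" using D infinite_iff_card_of_nat by blast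
  hence "|\<Union>n\<in>UNIV. ch Q d X n| \<le>o |D|"
    by (rule card_of_UNION_ordLeq_infinite[OF D]) (use ch_card[OF D X Q] in blast)
  thus ?thesis unfolding hull_def by simp
qed

lemma hull_diff:
  assumes d: "d \<in> H" and XH: "X \<subseteq> H" and x: "x \<in> hull Q d X" and y: "y \<in> hull Q d X" and ne: "x \<noteq> y"
  shows "\<exists>z\<in>hull Q d X. mem z x \<noteq> mem z y"
proof -
  have xH: "x \<in> H" and yH: "y \<in> H" using hull_H[OF d XH] x y by auto
  have "E x \<noteq> E y" using ne ext by blast
  then obtain z where "mem z x \<noteq> mem z y" unfolding elts_def by blast
  moreover hence "z \<in> H" using H_trans xH yH by blast
  ultimately have ex: "\<exists>z. z \<in> H \<and> mem z x \<noteq> mem z y" by blast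
  have "dw d x y = (SOME z. z \<in> H \<and> mem z x \<noteq> mem z y)" unfolding dw_def using ex by (rule if_P)
  hence "dw d x y \<in> H \<and> mem (dw d x y) x \<noteq> mem (dw d x y) y"
    using someI_ex[OF ex] by simp
  moreover obtain n where "{x, y} \<subseteq> ch Q d X n" using fin_in[of "{x,y}" Q d X] x y by auto
  hence "dw d x y \<in> ch Q d X (Suc n)" by (auto simp: stepW_def)
  hence "dw d x y \<in> hull Q d X" unfolding hull_def by blast
  ultimately show ?thesis by blast
qed

lemma hull_wit:
  assumes d: "d \<in> hull Q d X" "d \<in> H" and psi: "FEx x p \<in> Q" and fin: "finite (fv (FEx x p))"
    and e: "\<forall>n\<in>fv (FEx x p). e n \<in> hull Q d X" and s: "sat mem H e (FEx x p)"
  shows "\<exists>u\<in>hull Q d X. sat mem H (e(x:=u)) p"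
proof -
  let ?\<psi> = "FEx x p"
  define N where "N = Suc (Max (insert 0 (fv ?\<psi>)))"
  define xs where "xs = map (\<lambda>n. if n \<in> fv ?\<psi> then e n else d) [0..<N]"
  have lt: "n \<in> fv ?\<psi> \<Longrightarrow> n < N" for n
    using fin unfolding N_def by (simp add: le_imp_less_Suc)
  have agree: "\<forall>n\<in>fv ?\<psi>. envl d xs n = e n"
    using lt unfolding envl_def xs_def by simp
  have "set xs \<subseteq> hull Q d X" using e d(1) unfolding xs_def by auto
  then obtain m where m: "set xs \<subseteq> ch Q d X m" using fin_in[of "set xs" Q d X] by auto
  have "sat mem H (envl d xs) ?\<psi>" using s sat_cong[of ?\<psi> e "envl d xs"] agree by simp
  then obtain u where "u \<in> H" "sat mem H ((envl d xs)(x:=u)) p" by auto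
  hence ex: "\<exists>u. okw ?\<psi> (envl d xs) u" unfolding okw_def by auto
  let ?w = "wit d ?\<psi> (envl d xs)"
  have "?w = (SOME u. okw ?\<psi> (envl d xs) u)" unfolding wit_def using ex by (rule if_P)
  hence "okw ?\<psi> (envl d xs) ?w" using someI_ex[OF ex] by simp
  hence w: "?w \<in> H \<and> sat mem H ((envl d xs)(x:=?w)) p" unfolding okw_def by simp
  have "?w \<in> ch Q d X (Suc m)" using m psi by (auto simp: stepW_def)
  hence wh: "?w \<in> hull Q d X" unfolding hull_def by blast
  have "\<forall>n\<in>fv p. ((envl d xs)(x:=?w)) n = (e(x:=?w)) n" using agree by auto
  hence "sat mem H (e(x:=?w)) p = sat mem H ((envl d xs)(x:=?w)) p" by (intro sat_cong) simp
  hence "sat mem H (e(x:=?w)) p" using w by simp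
  thus ?thesis using wh by blast
qed

end


context zfm begin

lemma powax: "\<exists>z. E z = {y. E y \<subseteq> E x}"
  using conjunct1[OF conjunct2[OF conjunct2[OF conjunct2[OF conjunct2[OF conjunct2[OF zfD]]]]]] by blast

lemma down:
  assumes MH: "M \<subseteq> H"
    and cl: "\<And>x p e. FEx x p \<in> Q \<Longrightarrow> (\<forall>n\<in>fv (FEx x p). e n \<in> M) \<Longrightarrow> sat mem H e (FEx x p)
              \<Longrightarrow> \<exists>u\<in>M. sat mem H (e(x:=u)) p"
  shows "subs \<psi> \<subseteq> Q \<Longrightarrow> (\<forall>n\<in>fv \<psi>. e n \<in> M) \<Longrightarrow> sat mem H e \<psi> \<Longrightarrow> sat mem M e \<psi>"
proof (induction \<psi> arbitrary: e)
  case (FConj I f)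
  have "\<And>i. i \<in> I \<Longrightarrow> sat mem M e (f i)"
  proof -
    fix i assume i: "i \<in> I"
    show "sat mem M e (f i)"
      by (rule FConj.IH[OF rangeI]) (use FConj.prems i in auto)
  qed
  thus ?case by simp
next
  case (FDisj I f)
  then obtain i where i: "i \<in> I" "sat mem H e (f i)" by auto
  have "sat mem M e (f i)"
    by (rule FDisj.IH[OF rangeI]) (use FDisj.prems i in auto)
  thus ?case using i by auto
next
  case (FBall x t p)
  show ?case
  proof (simp only: sat.simps, intro ballI impI)
    fix u assume u: "u \<in> M" "mem u (ev e t)"
    have s: "sat mem H (e(x:=u)) p" using FBall.prems(3) u MH by auto
    have env: "\<forall>n\<in>fv p. (e(x:=u)) n \<in> M" using FBall.prems(2) u by auto
    have sub: "subs p \<subseteq> Q" using FBall.prems(1) by auto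
    show "sat mem M (e(x:=u)) p" by (rule FBall.IH[OF sub env s])
  qed
next
  case (FEx x p)
  have "FEx x p \<in> Q" using FEx.prems(1) subs_self by blast
  then obtain u where u: "u \<in> M" "sat mem H (e(x:=u)) p" using cl FEx.prems by blast
  have env: "\<forall>n\<in>fv p. (e(x:=u)) n \<in> M" using FEx.prems(2) u by auto
  have sub: "subs p \<subseteq> Q" using FEx.prems(1) by auto
  have "sat mem M (e(x:=u)) p" by (rule FEx.IH[OF sub env u(2)])
  thus ?case using u by auto
qed auto

lemma ev_g:
  assumes "pars_tm s \<subseteq> F" "\<forall>n\<in>fv_tm s. e n \<in> M" "F \<subseteq> M" "\<forall>p\<in>F. g p = p"
  shows "ev (g \<circ> e) s = g (ev e s) \<and> ev e s \<in> M"
  using assms by (cases s) auto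

lemma up:
  assumes inj: "inj_on g M" and gE: "\<And>x. E (g x) = g ` (E x \<inter> M)" and gH: "g ` M \<subseteq> H"
    and FM: "F \<subseteq> M" and gF: "\<forall>p\<in>F. g p = p" and tpQ: "\<forall>\<psi>\<in>Q. tp \<psi> \<subseteq> F"
  shows "subs \<psi> \<subseteq> Q \<Longrightarrow> (\<forall>n\<in>fv \<psi>. e n \<in> M) \<Longrightarrow> sat mem M e \<psi> \<Longrightarrow> sat mem H (g \<circ> e) \<psi>"
proof (induction \<psi> arbitrary: e)
  case (FEq s t)
  have tp: "pars_tm s \<subseteq> F" "pars_tm t \<subseteq> F" using tpQ[rule_format, of "FEq s t"] FEq.prems(1) by simp_all
  have a: "ev (g \<circ> e) s = g (ev e s)" "ev (g \<circ> e) t = g (ev e t)"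
    using ev_g[OF tp(1) _ FM gF] ev_g[OF tp(2) _ FM gF] FEq.prems(2) by auto
  have "ev e s = ev e t" using FEq.prems(3) by simp
  thus ?case by (simp only: sat.simps a)
next
  case (FNeq s t)
  have tp: "pars_tm s \<subseteq> F" "pars_tm t \<subseteq> F" using tpQ[rule_format, of "FNeq s t"] FNeq.prems(1) by simp_all
  have a: "ev (g \<circ> e) s = g (ev e s) \<and> ev e s \<in> M" "ev (g \<circ> e) t = g (ev e t) \<and> ev e t \<in> M"
    using ev_g[OF tp(1) _ FM gF] ev_g[OF tp(2) _ FM gF] FNeq.prems(2) by auto
  have "ev e s \<noteq> ev e t" using FNeq.prems(3) by simp
  hence "g (ev e s) \<noteq> g (ev e t)" using a inj unfolding inj_on_def by blast
  thus ?case by (simp only: sat.simps a[THEN conjunct1]) simp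
next
  case (FMem s t)
  have tp: "pars_tm s \<subseteq> F" "pars_tm t \<subseteq> F" using tpQ[rule_format, of "FMem s t"] FMem.prems(1) by simp_all
  have a: "ev (g \<circ> e) s = g (ev e s) \<and> ev e s \<in> M" "ev (g \<circ> e) t = g (ev e t) \<and> ev e t \<in> M"
    using ev_g[OF tp(1) _ FM gF] ev_g[OF tp(2) _ FM gF] FMem.prems(2) by auto
  have "ev e s \<in> E (ev e t) \<inter> M" using a FMem.prems(3) E_iff by auto
  hence "g (ev e s) \<in> E (g (ev e t))" using gE by simp
  hence "mem (g (ev e s)) (g (ev e t))" using E_iff by blast
  thus ?case by (simp only: sat.simps a[THEN conjunct1])
next
  case (FNmem s t)
  have tp: "pars_tm s \<subseteq> F" "pars_tm t \<subseteq> F" using tpQ[rule_format, of "FNmem s t"] FNmem.prems(1) by simp_all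
  have a: "ev (g \<circ> e) s = g (ev e s) \<and> ev e s \<in> M" "ev (g \<circ> e) t = g (ev e t) \<and> ev e t \<in> M"
    using ev_g[OF tp(1) _ FM gF] ev_g[OF tp(2) _ FM gF] FNmem.prems(2) by auto
  show ?case
  proof (simp only: sat.simps, rule notI)
    assume "mem (ev (g \<circ> e) s) (ev (g \<circ> e) t)"
    hence "mem (g (ev e s)) (g (ev e t))" by (simp only: a[THEN conjunct1])
    hence "g (ev e s) \<in> E (g (ev e t))" using E_iff by blast
    then obtain w where w: "w \<in> E (ev e t)" "w \<in> M" "g (ev e s) = g w" using gE by auto
    hence "ev e s = w" using a inj unfolding inj_on_def by blast
    thus False using w(1) FNmem.prems(3) E_iff by simp
  qed
next
  case (FConj I f)
  have "\<And>i. i \<in> I \<Longrightarrow> sat mem H (g \<circ> e) (f i)"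
  proof -
    fix i assume i: "i \<in> I"
    show "sat mem H (g \<circ> e) (f i)"
      by (rule FConj.IH[OF rangeI]) (use FConj.prems i in auto)
  qed
  thus ?case by (simp only: sat.simps) blast
next
  case (FDisj I f)
  then obtain i where i: "i \<in> I" "sat mem M e (f i)" by auto
  have "sat mem H (g \<circ> e) (f i)"
    by (rule FDisj.IH[OF rangeI]) (use FDisj.prems i in auto)
  thus ?case using i by (simp only: sat.simps) blast
next
  case (FBall x t p)
  have tp: "pars_tm t \<subseteq> F" using tpQ[rule_format, of "FBall x t p"] FBall.prems(1) by simp
  have a: "ev (g \<circ> e) t = g (ev e t) \<and> ev e t \<in> M"
    using ev_g[OF tp _ FM gF] FBall.prems(2) by auto
  show ?case
  proof (simp only: sat.simps, intro ballI impI)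
    fix u assume u: "u \<in> H" "mem u (ev (g \<circ> e) t)"
    hence "mem u (g (ev e t))" by (simp only: a[THEN conjunct1])
    hence "u \<in> E (g (ev e t))" using E_iff by blast
    then obtain y where y: "y \<in> E (ev e t)" "y \<in> M" "u = g y" using gE by auto
    have s: "sat mem M (e(x:=y)) p" using FBall.prems(3) y E_iff by auto
    have env: "\<forall>n\<in>fv p. (e(x:=y)) n \<in> M" using FBall.prems(2) y by auto
    have sub: "subs p \<subseteq> Q" using FBall.prems(1) by auto
    have "sat mem H (g \<circ> (e(x:=y))) p" by (rule FBall.IH[OF sub env s])
    moreover have "g \<circ> (e(x:=y)) = (g \<circ> e)(x:=u)" using y(3) by (auto simp: fun_eq_iff)
    ultimately show "sat mem H ((g \<circ> e)(x:=u)) p" by simp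
  qed
next
  case (FEx x p)
  then obtain u where u: "u \<in> M" "sat mem M (e(x:=u)) p" by auto
  have env: "\<forall>n\<in>fv p. (e(x:=u)) n \<in> M" using FEx.prems(2) u by auto
  have sub: "subs p \<subseteq> Q" using FEx.prems(1) by auto
  have "sat mem H (g \<circ> (e(x:=u))) p" by (rule FEx.IH[OF sub env u(2)])
  moreover have "g \<circ> (e(x:=u)) = (g \<circ> e)(x:=g u)" by (auto simp: fun_eq_iff)
  moreover have "g u \<in> H" using gH u by blast
  ultimately show ?case using u(1) by (simp only: sat.simps) (metis gH image_subset_iff)
qed auto

end


lemma (in zfm) main_contra:
  assumes sig: "sigma_fm mem k \<phi>" and fvs: "fv \<phi> \<subseteq> {0, 1}"
    and def: "\<forall>a\<in>H. \<forall>b\<in>H. sat mem H (\<lambda>n. if n = 0 then a else b) \<phi> \<longleftrightarrow> E b = {y. E y \<subseteq> E a}"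
  shows False
proof -
  define Q where "Q = subs \<phi>"
  have Qc: "|Q| <o |K|" unfolding Q_def by (rule subs_card[OF sig])
  define P where "P = (\<Union>\<psi>\<in>Q. tp \<psi>)"
  have Pc: "|P| <o |K|" unfolding P_def by (rule regU[OF Qc]) (simp add: fin_lessK finite_tp)
  have PH: "P \<subseteq> H"
  proof
    fix p assume "p \<in> P"
    then obtain \<psi> where \<psi>: "\<psi> \<in> subs \<phi>" "p \<in> tp \<psi>" unfolding P_def Q_def by blast
    have "sigma_fm mem k \<psi>" by (rule sigma_sub[OF sig \<psi>(1)])
    hence "tp \<psi> \<subseteq> H" by (rule sigma_tp)
    thus "p \<in> H" using \<psi>(2) by blast
  qed
  define T where "T = (\<Union>p\<in>P. insert p (tc mem p))"
  have Tc: "|T| <o |K|" unfolding T_def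
  proof (rule regU[OF Pc], rule ballI)
    fix p assume p: "p \<in> P"
    have "|tc mem p| <o |K|" using PH p H_iff by blast
    moreover have "|{p}| <o |K|" by (simp add: fin_lessK)
    ultimately have "|{p} \<union> tc mem p| <o |K|" using un_less by blast
    thus "|insert p (tc mem p)| <o |K|" by simp
  qed
  have TH: "T \<subseteq> H"
  proof
    fix y assume "y \<in> T"
    then obtain p where p: "p \<in> P" "y = p \<or> y \<in> tc mem p" unfolding T_def by blast
    have "p \<in> H" using PH p(1) by blast
    thus "y \<in> H" using p(2) H_tc by blast
  qed
  have Td: "\<forall>z\<in>T. E z \<subseteq> T"
  proof (intro ballI subsetI)
    fix z y assume z: "z \<in> T" and y: "y \<in> E z"
    then obtain p where p: "p \<in> P" "z = p \<or> z \<in> tc mem p" unfolding T_def by blast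
    have "mem y z" using y E_iff by blast
    hence "y \<in> tc mem p" using p(2) unfolding tc_def by (auto intro: tranclp.trancl_into_trancl)
    thus "y \<in> T" using p(1) unfolding T_def by blast
  qed
  obtain b1 where b1: "b1 \<in> K" "|Q| \<le>o |E b1|" using bound[OF Qc] by blast
  obtain b0 where b0: "b0 \<in> K" "|UNIV :: nat set| \<le>o |E b0|" using bound[OF nat_K] by blast
  have "|T \<union> E b1 \<union> E b0| <o |K|" using un_less[OF un_less[OF Tc card_lt[OF b1(1)]] card_lt[OF b0(1)]] .
  then obtain a where a: "a \<in> K" "|T \<union> E b1 \<union> E b0| \<le>o |E a|" using bound by blast
  define D where "D = E a"
  have sub_le: "S \<subseteq> T \<union> E b1 \<union> E b0 \<Longrightarrow> |S| \<le>o |D|" for S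
    unfolding D_def using card_of_mono1 a(2) ordLeq_transitive by blast
  have QD: "|Q| \<le>o |D|" using b1(2) sub_le[of "E b1"] ordLeq_transitive by blast
  have TD: "|T| \<le>o |D|" using sub_le by blast
  have Dinf: "infinite D" using b0(2) sub_le[of "E b0"] ordLeq_transitive infinite_iff_card_of_nat by blast
  have aD: "E a \<subseteq> D" unfolding D_def by simp
  have Ead: "\<forall>z\<in>E a. E z \<subseteq> E a" using b_trans[OF a(1)] by blast
  have aH: "a \<in> H"
  proof -
    have "tc mem a \<subseteq> E a" by (rule tc_sub[OF Ead]) simp
    hence "|tc mem a| \<le>o |E a|" by (rule card_of_mono1)
    thus ?thesis using card_lt[OF a(1)] H_iff ordLeq_ordLess_trans by blast
  qed
  obtain pa where pa: "E pa = {y. E y \<subseteq> E a}" using powax by blast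
  have Epa_le: "|E pa| \<le>o |Pow (E a)|"
  proof -
    have "inj_on E (E pa)" using ext unfolding inj_on_def by blast
    moreover have "E ` E pa \<subseteq> Pow (E a)" using pa by auto
    ultimately show ?thesis using card_of_ordLeq by blast
  qed
  have paH: "pa \<in> H"
  proof -
    have dc: "\<forall>z\<in>E pa \<union> E a. E z \<subseteq> E pa \<union> E a" using pa Ead by auto
    have "tc mem pa \<subseteq> E pa \<union> E a" by (rule tc_sub[OF dc]) simp
    hence "|tc mem pa| \<le>o |E pa \<union> E a|" by (rule card_of_mono1)
    moreover have "|E pa| <o |K|" using Epa_le strong[OF a(1)] ordLeq_ordLess_trans by blast
    hence "|E pa \<union> E a| <o |K|" using un_less card_lt[OF a(1)] by blast
    ultimately show ?thesis using H_iff ordLeq_ordLess_trans by blast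
  qed
  define F where "F = T \<union> E a \<union> {a}"
  have Fd: "\<forall>z\<in>F. E z \<subseteq> F" unfolding F_def using Td Ead by auto
  define X where "X = F \<union> {pa}"
  have XH: "X \<subseteq> H" unfolding X_def F_def using TH aH paH Ead H_trans E_iff by blast
  have XD: "|X| \<le>o |D|"
  proof -
    have "|{a, pa}| \<le>o |D|" using fin_less[of "{a,pa}" D] Dinf ordLess_imp_ordLeq by auto
    moreover have "|E a| \<le>o |D|" unfolding D_def by (rule ordLeq_refl[OF card_of_Card_order])
    ultimately have "|T \<union> E a \<union> {a, pa}| \<le>o |D|" using un_leq[OF Dinf] TD by blast
    moreover have "X = T \<union> E a \<union> {a, pa}" unfolding X_def F_def by blast
    ultimately show ?thesis by simp
  qed
  define M where "M = hull Q a X"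
  have aM: "a \<in> M" and XM: "X \<subseteq> M" unfolding M_def X_def F_def using X_hull[of X Q a] by (auto simp: X_def F_def)
  have MH: "M \<subseteq> H" unfolding M_def by (rule hull_H[OF aH XH])
  have MD: "|M| \<le>o |D|" unfolding M_def by (rule hull_card[OF Dinf XD QD])
  have finQ: "\<forall>\<psi>\<in>Q. finite (fv \<psi>)" unfolding Q_def
    using fin_fv[of \<phi>] fvs finite_subset by blast
  define e0 where "e0 = (\<lambda>n::nat. if n = 0 then a else pa)"
  have s0: "sat mem H e0 \<phi>" using def aH paH pa unfolding e0_def by blast
  have e0M: "\<forall>n\<in>fv \<phi>. e0 n \<in> M" using aM XM unfolding e0_def X_def by auto
  have sM: "sat mem M e0 \<phi>"
  proof (rule down[OF MH _ _ e0M s0])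
    fix x p e assume "FEx x p \<in> Q" "\<forall>n\<in>fv (FEx x p). e n \<in> M" "sat mem H e (FEx x p)"
    thus "\<exists>u\<in>M. sat mem H (e(x:=u)) p"
      unfolding M_def using hull_wit[of a Q X x p e] aM aH finQ unfolding M_def by blast
  next
    show "subs \<phi> \<subseteq> Q" unfolding Q_def by simp
  qed
  let ?g = "pi M"
  have inj: "inj_on ?g M"
    by (rule pi_inj) (use hull_diff[OF aH XH] in \<open>auto simp: M_def\<close>)
  have gH: "?g ` M \<subseteq> H"
  proof
    fix v assume "v \<in> ?g ` M"
    then obtain x where x: "x \<in> M" "v = ?g x" by blast
    have "|tc mem v| \<le>o |?g ` M|" using pi_tc x(2) card_of_mono1 by blast
    moreover have "|?g ` M| \<le>o |D|" using MD card_of_image ordLeq_transitive by blast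
    moreover have "|D| <o |K|" unfolding D_def by (rule card_lt[OF a(1)])
    ultimately have "|tc mem v| <o |K|" using ordLeq_transitive ordLeq_ordLess_trans by blast
    thus "v \<in> H" using H_iff by blast
  qed
  have FM: "F \<subseteq> M" using XM unfolding X_def by blast
  have gF: "\<forall>p\<in>F. ?g p = p" using pi_fix[OF FM Fd] by blast
  have tpQ: "\<forall>\<psi>\<in>Q. tp \<psi> \<subseteq> F" unfolding F_def T_def P_def by blast
  have sH: "sat mem H (?g \<circ> e0) \<phi>"
    by (rule up[OF inj pi_E gH FM gF tpQ _ e0M sM]) (simp add: Q_def)
  have ga: "?g a = a" using gF unfolding F_def by blast
  have "?g \<circ> e0 = (\<lambda>n. if n = 0 then a else ?g pa)" using ga unfolding e0_def by (auto simp: fun_eq_iff)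
  moreover have gpaH: "?g pa \<in> H" using gH XM unfolding X_def by blast
  ultimately have Egpa: "E (?g pa) = {y. E y \<subseteq> E a}" using def aH sH by auto
  have "E (?g pa) \<subseteq> ?g ` M" using pi_E by auto
  hence "{y. E y \<subseteq> E a} \<subseteq> ?g ` M" using Egpa by simp
  hence c1: "|{y. E y \<subseteq> E a}| \<le>o |?g ` M|" by (rule card_of_mono1)
  have c2: "|?g ` M| \<le>o |M|" by (rule card_of_image)
  have c3: "|{y. E y \<subseteq> E a}| \<le>o |D|" using ordLeq_transitive[OF c1 ordLeq_transitive[OF c2 MD]] .
  have "E ` {y. E y \<subseteq> E a} = Pow D"
  proof
    show "E ` {y. E y \<subseteq> E a} \<subseteq> Pow D" unfolding D_def by auto
    show "Pow D \<subseteq> E ` {y. E y \<subseteq> E a}"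
    proof
      fix S assume "S \<in> Pow D"
      then obtain z where "E z = S" using sep[of S a] unfolding D_def by auto
      thus "S \<in> E ` {y. E y \<subseteq> E a}" using \<open>S \<in> Pow D\<close> unfolding D_def by auto
    qed
  qed
  moreover have "|E ` {y. E y \<subseteq> E a}| \<le>o |{y. E y \<subseteq> E a}|" by (rule card_of_image)
  ultimately have "|Pow D| \<le>o |{y. E y \<subseteq> E a}|" by simp
  hence "|Pow D| \<le>o |D|" using c3 by (rule ordLeq_transitive)
  thus False using card_of_Pow[of D] not_ordLess_ordLeq by blast
qed

theorem mainTheorem3:
  fixes mem :: "'v \<Rightarrow> 'v \<Rightarrow> bool" and k :: 'v
  assumes "zf_model mem"
    and "strongly_inaccessible mem k"
  shows "\<not> (\<exists>\<phi> :: 'v fm. sigma_fm mem k \<phi> \<and> fv \<phi> \<subseteq> {0, 1} \<and>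
            (\<forall>a\<in>Hk mem k. \<forall>b\<in>Hk mem k.
               sat mem (Hk mem k) (\<lambda>n. if n = 0 then a else b) \<phi>
               \<longleftrightarrow> elts mem b = {y. elts mem y \<subseteq> elts mem a}))"
proof
  interpret zfm mem k using assms by unfold_locales
  assume "\<exists>\<phi> :: 'v fm. sigma_fm mem k \<phi> \<and> fv \<phi> \<subseteq> {0, 1} \<and>
            (\<forall>a\<in>Hk mem k. \<forall>b\<in>Hk mem k.
               sat mem (Hk mem k) (\<lambda>n. if n = 0 then a else b) \<phi>
               \<longleftrightarrow> elts mem b = {y. elts mem y \<subseteq> elts mem a})"
  then obtain \<phi> where "sigma_fm mem k \<phi>" "fv \<phi> \<subseteq> {0, 1}"
    "\<forall>a\<in>Hk mem k. \<forall>b\<in>Hk mem k. sat mem (Hk mem k) (\<lambda>n. if n = 0 then a else b) \<phi>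
               \<longleftrightarrow> elts mem b = {y. elts mem y \<subseteq> elts mem a}" by blast
  thus False by (rule main_contra)
qed


end
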